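(* Let $\delta,\varepsilon,\varepsilon'>0$ and $M\in\mathbb{N}$. Let $\mu$ be a distribution on $\{0,1\}^n\times\{0,1\}^n$ and $f\colon\{0,1\}^n\times\{0,1\}^n\to\{0,1\}$ such that $(f,\mu)$ has $(\varepsilon,\delta)$ relative-discrepancy. If $\Pi$ is a protocol with universal external information at most $M$, then for $(X,Y)\sim\mu$, \[ \mathrm{SD}\big(\Pi(X,Y)|_{f(X,Y)=0},\ \Pi(X,Y)|_{f(X,Y)=1}\big)\le 20\Big(\varepsilon+\varepsilon'+\frac{2^{4M}}{\varepsilon'^2}\delta\Big). \]
   Context: $\mathrm{SD}(P,Q)=\frac12\sum_u|P(u)-Q(u)|$ is statistical distance. $(f,\mu)$ has $(\varepsilon,\delta)$ relative-discrepancy if there is a distribution $\rho$ such that for every rectangle $R=A\times B$ with $\rho(R)\ge\delta$, $\mu(R\cap f^{-1}(0))\ge(\frac12-\varepsilon)\rho(R)$ and $\mu(R\cap f^{-1}(1))\ge(\frac12-\varepsilon)\rho(R)$. Protocols: Alice and Bob alternate, Alice sending $A_1,\dots,A_m$, Bob $B_1,\dots,B_m$, order $A_1,B_1,A_2,\dots$, each message depending on the sender's input, previous messages and the sender's randomness. For transcript $\pi=(a,b)$, $P^x_A(\pi)=\prod_j\Pr[A_j=a_j\mid A_{<j}=a_{<j},B_{<j}=b_{<j},X=x]$, $P^y_B(\pi)=\prod_j\Pr[B_j=b_j\mid A_{\le j}=a_{\le j},B_{<j}=b_{<j},Y=y]$. Universal external information at most $M$: there exist non-negative $\eta_A,\eta_B$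 on transcripts with $\eta_A\eta_B$ a probability distribution and, for all $x,y,\pi$, $2^{-M}\le P^x_A(\pi)/\eta_A(\pi)\le2^M$ and $2^{-M}\le P^y_B(\pi)/\eta_B(\pi)\le 2^M$. *)

theory Defs
  imports Complex_Main
begin

definition cube :: "nat \<Rightarrow> bool list set" where
  "cube n = {xs. length xs = n}"

text \<open>A probability distribution on a finite set S (values outside S are irrelevant).\<close>
definition is_dist :: "'u set \<Rightarrow> ('u \<Rightarrow> real) \<Rightarrow> bool" where
  "is_dist S p \<longleftrightarrow> (\<forall>u\<in>S. 0 \<le> p u) \<and> (\<Sum>u\<in>S. p u) = 1"

definition wt :: "('u \<Rightarrow> real) \<Rightarrow> 'u set \<Rightarrow> real" where
  "wt p S = (\<Sum>u\<in>S. p u)"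

text \<open>Boolean f: output 0 is False, output 1 is True.\<close>
definition rel_discrepancy ::
  "nat \<Rightarrow> (bool list \<times> bool list \<Rightarrow> bool) \<Rightarrow> (bool list \<times> bool list \<Rightarrow> real) \<Rightarrow> real \<Rightarrow> real \<Rightarrow> bool" where
  "rel_discrepancy n f \<mu> \<epsilon> \<delta> \<longleftrightarrow>
     (\<exists>\<rho>. is_dist (cube n \<times> cube n) \<rho> \<and>
        (\<forall>A B. A \<subseteq> cube n \<longrightarrow> B \<subseteq> cube n \<longrightarrow> wt \<rho> (A \<times> B) \<ge> \<delta> \<longrightarrow>
           wt \<mu> ((A \<times> B) \<inter> {u. \<not> f u}) \<ge> (1/2 - \<epsilon>) * wt \<rho> (A \<times> B) \<and>
           wt \<mu> ((A \<times> B) \<inter> {u. f u}) \<ge> (1/2 - \<epsilon>) * wt \<rho> (A \<times> B)))"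

text \<open>A private-coin protocol with m rounds (Alice sends A_1, Bob B_1, Alice A_2, ...),
  messages from a finite alphabet 'm, given by its next-message kernels:
  \<open>alice j x (a,b) c\<close> = Pr[A_(j+1) = c | previous messages a (Alice's first j) and b (Bob's first j), X = x];
  \<open>bob j y (a,b) c\<close> = Pr[B_(j+1) = c | a = Alice's first j+1, b = Bob's first j, Y = y].\<close>
type_synonym 'm kernel = "nat \<Rightarrow> bool list \<Rightarrow> 'm list \<times> 'm list \<Rightarrow> 'm \<Rightarrow> real"

definition valid_protocol :: "nat \<Rightarrow> nat \<Rightarrow> ('m::finite) kernel \<Rightarrow> 'm kernel \<Rightarrow> bool" where
  "valid_protocol n m alice bob \<longleftrightarrow>
     (\<forall>j<m. \<forall>x\<in>cube n. \<forall>h. (\<forall>c. 0 \<le> alice j x h c) \<and> (\<Sum>c\<in>UNIV. alice j x h c) = 1) \<and>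
     (\<forall>j<m. \<forall>y\<in>cube n. \<forall>h. (\<forall>c. 0 \<le> bob j y h c) \<and> (\<Sum>c\<in>UNIV. bob j y h c) = 1)"

definition transcripts :: "nat \<Rightarrow> ('m list \<times> 'm list) set" where
  "transcripts m = {(a, b). length a = m \<and> length b = m}"

definition PA :: "nat \<Rightarrow> 'm kernel \<Rightarrow> bool list \<Rightarrow> 'm list \<times> 'm list \<Rightarrow> real" where
  "PA m alice x \<pi> = (\<Prod>j<m. alice j x (take j (fst \<pi>), take j (snd \<pi>)) (fst \<pi> ! j))"

definition PB :: "nat \<Rightarrow> 'm kernel \<Rightarrow> bool list \<Rightarrow> 'm list \<times> 'm list \<Rightarrow> real" where
  "PB m bob y \<pi> = (\<Prod>j<m. bob j y (take (Suc j) (fst \<pi>), take j (snd \<pi>)) (snd \<pi> ! j))"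

definition univ_ext_info_le ::
  "nat \<Rightarrow> nat \<Rightarrow> ('m::finite) kernel \<Rightarrow> 'm kernel \<Rightarrow> nat \<Rightarrow> bool" where
  "univ_ext_info_le n m alice bob M \<longleftrightarrow>
     (\<exists>\<eta>A \<eta>B. (\<forall>\<pi>\<in>transcripts m. 0 \<le> \<eta>A \<pi> \<and> 0 \<le> \<eta>B \<pi>) \<and>
        (\<Sum>\<pi>\<in>transcripts m. \<eta>A \<pi> * \<eta>B \<pi>) = 1 \<and>
        (\<forall>x\<in>cube n. \<forall>y\<in>cube n. \<forall>\<pi>\<in>transcripts m.
           (1/2) ^ M \<le> PA m alice x \<pi> / \<eta>A \<pi> \<and> PA m alice x \<pi> / \<eta>A \<pi> \<le> 2 ^ M \<and>
           (1/2) ^ M \<le> PB m bob y \<pi> / \<eta>B \<pi> \<and> PB m bob y \<pi> / \<eta>B \<pi> \<le> 2 ^ M))"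

text \<open>Distribution of the transcript \<Pi>(X,Y) for (X,Y) ~ \<mu>, conditioned on f(X,Y) = c.\<close>
definition cond_transcript ::
  "nat \<Rightarrow> nat \<Rightarrow> 'm kernel \<Rightarrow> 'm kernel \<Rightarrow> (bool list \<times> bool list \<Rightarrow> real)
    \<Rightarrow> (bool list \<times> bool list \<Rightarrow> bool) \<Rightarrow> bool \<Rightarrow> 'm list \<times> 'm list \<Rightarrow> real" where
  "cond_transcript n m alice bob \<mu> f c \<pi> =
     (\<Sum>u\<in>(cube n \<times> cube n) \<inter> {u. f u = c}. \<mu> u * PA m alice (fst u) \<pi> * PB m bob (snd u) \<pi>)
     / wt \<mu> ((cube n \<times> cube n) \<inter> {u. f u = c})"

definition SD :: "'u set \<Rightarrow> ('u \<Rightarrow> real) \<Rightarrow> ('u \<Rightarrow> real) \<Rightarrow> real" where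
  "SD S P Q = (1/2) * (\<Sum>u\<in>S. \<bar>P u - Q u\<bar>)"

end

theory Submission
  imports Defs
begin


lemma finite_cube: "finite (cube n)"
proof -
  have "cube n = {xs. set xs \<subseteq> (UNIV::bool set) \<and> length xs = n}" by (auto simp: cube_def)
  thus ?thesis using finite_lists_length_eq[of "UNIV::bool set" n] by simp
qed

lemma cube_ne: "replicate n False \<in> cube n" by (simp add: cube_def)

lemma finite_transcripts: "finite (transcripts m :: ('m::finite list \<times> 'm list) set)"
proof -
  have "transcripts m = {xs::'m list. set xs \<subseteq> UNIV \<and> length xs = m} \<times> {xs::'m list. set xs \<subseteq> UNIV \<and> length xs = m}"
    by (auto simp: transcripts_def)
  thus ?thesis using finite_lists_length_eq[of "UNIV::'m set" m] by simp
qed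

lemma transcripts_Suc:
  "transcripts (Suc k) = (\<lambda>((a,b),c,d). (a@[c], b@[d])) ` (transcripts k \<times> UNIV \<times> UNIV)"
proof (rule set_eqI, rule iffI)
  fix p :: "'a list \<times> 'a list" assume "p \<in> transcripts (Suc k)"
  then obtain a b where p: "p = (a,b)" "length a = Suc k" "length b = Suc k" by (auto simp: transcripts_def)
  then obtain a' c where a: "a = a'@[c]" by (metis append_butlast_last_id length_0_conv nat.distinct(1))
  obtain b' d where b: "b = b'@[d]" using p by (metis append_butlast_last_id length_0_conv nat.distinct(1))
  show "p \<in> (\<lambda>((a,b),c,d). (a@[c], b@[d])) ` (transcripts k \<times> UNIV \<times> UNIV)"
    using p a b by (auto simp: transcripts_def image_iff intro!: bexI[of _ "((a',b'),c,d)"])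
qed (auto simp: transcripts_def)

lemma inj_app: "inj_on (\<lambda>((a,b),c,d). (a@[c], b@[d])) X"
  by (auto simp: inj_on_def)

lemma PA_Suc: assumes "length a = k" "length b = k"
  shows "PA (Suc k) alice x (a@[c], b@[d]) = PA k alice x (a,b) * alice k x (a,b) c"
  unfolding PA_def using assms by (auto simp: nth_append intro!: prod.cong)

lemma PB_Suc: assumes "length a = k" "length b = k"
  shows "PB (Suc k) bob y (a@[c], b@[d]) = PB k bob y (a,b) * bob k y (a@[c],b) d"
  unfolding PB_def using assms by (auto simp: nth_append intro!: prod.cong)

lemma sum_Q_gen:
  assumes "valid_protocol n m alice bob" "x \<in> cube n" "y \<in> cube n" "k \<le> m"
  shows "(\<Sum>\<pi>\<in>transcripts k. PA k alice x \<pi> * PB k bob y \<pi>) = 1"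
  using assms(4)
proof (induction k)
  case 0
  have T0: "transcripts 0 = {([],[])}" by (auto simp: transcripts_def)
  show ?case by (simp add: T0 PA_def PB_def)
next
  case (Suc k)
  have km: "k < m" using Suc by simp
  have A: "(\<Sum>c\<in>UNIV. alice k x h c) = 1" for h using assms(1,2) km unfolding valid_protocol_def by blast
  have B: "(\<Sum>c\<in>UNIV. bob k y h c) = 1" for h using assms(1,3) km unfolding valid_protocol_def by blast
  have "(\<Sum>\<pi>\<in>transcripts (Suc k). PA (Suc k) alice x \<pi> * PB (Suc k) bob y \<pi>)
     = (\<Sum>z\<in>transcripts k \<times> UNIV \<times> UNIV. (case z of ((a,b),c,d) \<Rightarrow>
          PA k alice x (a,b) * PB k bob y (a,b) * (alice k x (a,b) c * bob k y (a@[c],b) d)))"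
    unfolding transcripts_Suc
    by (subst sum.reindex[OF inj_app]) (auto simp: PA_Suc PB_Suc transcripts_def intro!: sum.cong)
  also have "\<dots> = (\<Sum>p\<in>transcripts k. \<Sum>q\<in>(UNIV::('a\<times>'a) set). (case p of (a,b) \<Rightarrow> case q of (c,d) \<Rightarrow>
          PA k alice x (a,b) * PB k bob y (a,b) * (alice k x (a,b) c * bob k y (a@[c],b) d)))"
    by (subst sum.cartesian_product) (auto intro!: sum.cong split: prod.splits)
  also have "\<dots> = (\<Sum>p\<in>transcripts k. PA k alice x p * PB k bob y p)"
  proof (rule sum.cong[OF refl])
    fix p :: "'a list \<times> 'a list" obtain a b where p: "p = (a,b)" by fastforce
    have "(\<Sum>q\<in>(UNIV::('a\<times>'a) set). (case q of (c,d) \<Rightarrow> alice k x (a,b) c * bob k y (a@[c],b) d))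
        = (\<Sum>c\<in>UNIV. \<Sum>d\<in>UNIV. alice k x (a,b) c * bob k y (a@[c],b) d)"
      by (subst sum.cartesian_product) (simp add: UNIV_Times_UNIV[symmetric] del: UNIV_Times_UNIV)
    also have "\<dots> = (\<Sum>c\<in>UNIV. alice k x (a,b) c)" by (simp add: sum_distrib_left[symmetric] B)
    also have "\<dots> = 1" by (rule A)
    finally have S: "(\<Sum>q\<in>(UNIV::('a\<times>'a) set). (case q of (c,d) \<Rightarrow> alice k x (a,b) c * bob k y (a@[c],b) d)) = 1" .
    show "(\<Sum>q\<in>(UNIV::('a\<times>'a) set). (case p of (a,b) \<Rightarrow> case q of (c,d) \<Rightarrow>
          PA k alice x (a,b) * PB k bob y (a,b) * (alice k x (a,b) c * bob k y (a@[c],b) d)))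
          = PA k alice x p * PB k bob y p"
      using S unfolding p by (simp add: case_prod_beta sum_distrib_left[symmetric])
  qed
  also have "\<dots> = 1" using Suc by simp
  finally show ?case .
qed



lemma bilin:
  fixes \<nu> :: "'a \<times> 'b \<Rightarrow> real"
  assumes fX: "finite X" and fY: "finite Y" and K: "K \<ge> 0"
    and a: "\<forall>x\<in>X. 0 \<le> a x \<and> a x \<le> K" and b: "\<forall>y\<in>Y. 0 \<le> b y \<and> b y \<le> K"
    and R: "\<forall>A B. A \<subseteq> X \<longrightarrow> B \<subseteq> Y \<longrightarrow> (\<Sum>u\<in>A\<times>B. \<nu> u) \<ge> - c"
  shows "(\<Sum>u\<in>X\<times>Y. \<nu> u * a (fst u) * b (snd u)) \<ge> - c * K^2"
proof -
  define g where "g x = (\<Sum>y\<in>Y. \<nu> (x,y) * b y)" for x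
  define A where "A = {x\<in>X. g x < 0}"
  define h where "h y = (\<Sum>x\<in>A. \<nu> (x,y))" for y
  define B where "B = {y\<in>Y. h y < 0}"
  have "(\<Sum>u\<in>X\<times>Y. \<nu> u * a (fst u) * b (snd u)) = (\<Sum>x\<in>X. a x * g x)"
    unfolding g_def sum_distrib_left sum.cartesian_product by (auto intro!: sum.cong simp: mult_ac)
  also have "\<dots> \<ge> (\<Sum>x\<in>X. K * (if x \<in> A then g x else 0))"
  proof (rule sum_mono)
    fix x assume x: "x \<in> X"
    show "K * (if x \<in> A then g x else 0) \<le> a x * g x"
    proof (cases "x \<in> A")
      case True then have "g x < 0" by (simp add: A_def)
      then show ?thesis using True a x by (simp add: mult_right_mono_neg)
    next
      case False then have "g x \<ge> 0" using x by (simp add: A_def)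
      then show ?thesis using False a x by simp
    qed
  qed
  finally have 1: "(\<Sum>u\<in>X\<times>Y. \<nu> u * a (fst u) * b (snd u)) \<ge> K * (\<Sum>x\<in>A. g x)"
    using fX by (simp add: sum.If_cases A_def sum_distrib_left[symmetric] Int_def conj_commute)
  have "(\<Sum>x\<in>A. g x) = (\<Sum>y\<in>Y. b y * h y)"
    unfolding g_def h_def by (subst sum.swap) (simp add: sum_distrib_left mult_ac)
  also have "\<dots> \<ge> (\<Sum>y\<in>Y. K * (if y \<in> B then h y else 0))"
  proof (rule sum_mono)
    fix y assume y: "y \<in> Y"
    show "K * (if y \<in> B then h y else 0) \<le> b y * h y"
    proof (cases "y \<in> B")
      case True then have "h y < 0" by (simp add: B_def)
      then show ?thesis using True b y by (simp add: mult_right_mono_neg)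
    next
      case False then have "h y \<ge> 0" using y by (simp add: B_def)
      then show ?thesis using False b y by simp
    qed
  qed
  finally have 2: "(\<Sum>x\<in>A. g x) \<ge> K * (\<Sum>y\<in>B. h y)"
    using fY by (simp add: sum.If_cases B_def sum_distrib_left[symmetric] Int_def conj_commute)
  have "(\<Sum>y\<in>B. h y) = (\<Sum>u\<in>A\<times>B. \<nu> u)"
    unfolding h_def by (subst sum.swap) (simp add: sum.cartesian_product)
  also have "\<dots> \<ge> -c" using R by (simp add: A_def B_def)
  finally have 3: "(\<Sum>y\<in>B. h y) \<ge> -c" .
  have "K * (\<Sum>x\<in>A. g x) \<ge> K * (K * (\<Sum>y\<in>B. h y))" using 2 K by (rule mult_left_mono)
  moreover have "K * (K * (\<Sum>y\<in>B. h y)) \<ge> K * (K * -c)" using 3 K by (intro mult_left_mono) auto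
  moreover have "K * (K * -c) = - c * K^2" by (simp add: power2_eq_square)
  ultimately show ?thesis using 1 by linarith
qed

lemma PA_nonneg: "valid_protocol n m alice bob \<Longrightarrow> x \<in> cube n \<Longrightarrow> 0 \<le> PA m alice x \<pi>"
  unfolding PA_def valid_protocol_def by (auto intro!: prod_nonneg)

lemma PB_nonneg: "valid_protocol n m alice bob \<Longrightarrow> y \<in> cube n \<Longrightarrow> 0 \<le> PB m bob y \<pi>"
  unfolding PB_def valid_protocol_def by (auto intro!: prod_nonneg)

lemma final_arith:
  fixes SD \<epsilon> t c K :: real
  assumes "\<epsilon> > 0" "t > 0" "c \<ge> 0" "K \<ge> c^2" "SD \<le> 1" "SD \<le> 4*\<epsilon> + c"
  shows "SD \<le> 20 * (\<epsilon> + t + K / t^2)"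
proof (cases "t \<ge> c/20")
  case True
  have "K / t^2 \<ge> 0" using assms by (metis divide_nonneg_nonneg order.trans zero_le_power2)
  moreover have "20*(\<epsilon>+t+K/t^2) = 20*\<epsilon> + 20*t + 20*(K/t^2)" by simp
  ultimately show ?thesis using assms True by linarith
next
  case False
  then have "t^2 < (c/20)^2" using assms by (simp add: power_strict_mono)
  then have "t^2 * 400 < c^2" by (simp add: power_divide)
  then have "t^2 * 400 < K" using assms by linarith
  then have "K / t^2 > 400" using assms by (simp add: field_simps)
  moreover have "20*(\<epsilon>+t+K/t^2) = 20*\<epsilon> + 20*t + 20*(K/t^2)" by simp
  ultimately show ?thesis using assms by linarith
qed



lemma sum_filt: "finite C \<Longrightarrow> sum g (C \<inter> {u. P u}) = (\<Sum>u\<in>C. if P u then g u else 0)"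
  by (simp add: sum.inter_restrict)

lemma arith2:
  fixes SD \<epsilon> t K :: real
  assumes "\<epsilon> > 0" "t > 0" "K \<ge> 1" "SD \<le> 1"
  shows "SD \<le> 20 * (\<epsilon> + t + K / t^2)"
proof (cases "t \<ge> 1/20")
  case True
  have "K / t^2 \<ge> 0" using assms by (metis divide_nonneg_nonneg order.trans zero_le_power2 zero_le_one)
  moreover have "20*(\<epsilon>+t+K/t^2) = 20*\<epsilon> + 20*t + 20*(K/t^2)" by simp
  ultimately show ?thesis using assms True by linarith
next
  case False
  then have "t^2 < (1/20)^2" using assms by (simp add: power_strict_mono)
  then have "t^2 * 400 < 1" by (simp add: power_divide)
  then have "t^2 * 400 < K" using assms by linarith
  then have "K / t^2 > 400" using assms by (simp add: field_simps)
  moreover have "20*(\<epsilon>+t+K/t^2) = 20*\<epsilon> + 20*t + 20*(K/t^2)" by simp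
  ultimately show ?thesis using assms by linarith
qed

lemma arith3:
  fixes SD \<epsilon> t K :: real
  assumes "\<epsilon> \<ge> 1/20" "t > 0" "K \<ge> 0" "SD \<le> 1"
  shows "SD \<le> 20 * (\<epsilon> + t + K / t^2)"
proof -
  have "K / t^2 \<ge> 0" using assms by simp
  moreover have "20*(\<epsilon>+t+K/t^2) = 20*\<epsilon> + 20*t + 20*(K/t^2)" by simp
  ultimately show ?thesis using assms by linarith
qed

theorem lemma3p8:
  fixes n m M :: nat and \<delta> \<epsilon> \<epsilon>' :: real
    and \<mu> :: "bool list \<times> bool list \<Rightarrow> real"
    and f :: "bool list \<times> bool list \<Rightarrow> bool"
    and alice bob :: "('m::finite) kernel"
  assumes "\<delta> > 0" and "\<epsilon> > 0" and "\<epsilon>' > 0"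
    and "is_dist (cube n \<times> cube n) \<mu>"
    and "rel_discrepancy n f \<mu> \<epsilon> \<delta>"
    and "valid_protocol n m alice bob"
    and "univ_ext_info_le n m alice bob M"
  shows "SD (transcripts m) (cond_transcript n m alice bob \<mu> f False)
                            (cond_transcript n m alice bob \<mu> f True)
         \<le> 20 * (\<epsilon> + \<epsilon>' + 2 ^ (4 * M) / \<epsilon>'^2 * \<delta>)"
proof -
  define C where "C = cube n \<times> cube n"
  define T where "T = (transcripts m :: ('m list \<times> 'm list) set)"
  define Q where "Q u \<pi> = PA m alice (fst u) \<pi> * PB m bob (snd u) \<pi>" for u \<pi>
  have fC: "finite C" unfolding C_def using finite_cube by simp
  have fT: "finite T" unfolding T_def by (rule finite_transcripts)
  have Q0: "0 \<le> Q u \<pi>" if "u \<in> C" for u \<pi>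
    using that assms(6) PA_nonneg PB_nonneg unfolding Q_def C_def by (metis mem_Times_iff mult_nonneg_nonneg)
  have Q1: "(\<Sum>\<pi>\<in>T. Q u \<pi>) = 1" if "u \<in> C" for u
    using that sum_Q_gen[OF assms(6), of "fst u" "snd u" m] unfolding Q_def C_def T_def by auto
  have mu0: "0 \<le> \<mu> u" if "u \<in> C" for u using assms(4) that unfolding is_dist_def C_def by blast
  have mu1: "(\<Sum>u\<in>C. \<mu> u) = 1" using assms(4) unfolding is_dist_def C_def by blast
  define m0 where "m0 \<pi> = (\<Sum>u\<in>C. (if f u then 0 else \<mu> u * Q u \<pi>))" for \<pi>
  define m1 where "m1 \<pi> = (\<Sum>u\<in>C. (if f u then \<mu> u * Q u \<pi> else 0))" for \<pi>
  define p0 where "p0 = wt \<mu> (C \<inter> {u. \<not> f u})"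
  define p1 where "p1 = wt \<mu> (C \<inter> {u. f u})"
  have ct0: "cond_transcript n m alice bob \<mu> f False \<pi> = m0 \<pi> / p0" for \<pi>
  proof -
    have e: "C \<inter> {u. f u = False} = {u\<in>C. \<not> f u}" "C \<inter> {u. \<not> f u} = {u\<in>C. \<not> f u}" by auto
    have "(\<Sum>u\<in>{u\<in>C. \<not> f u}. \<mu> u * PA m alice (fst u) \<pi> * PB m bob (snd u) \<pi>) = m0 \<pi>"
      unfolding m0_def Q_def using fC by (subst sum.inter_filter) (auto intro!: sum.cong)
    thus ?thesis unfolding cond_transcript_def p0_def C_def[symmetric] e by simp
  qed
  have ct1: "cond_transcript n m alice bob \<mu> f True \<pi> = m1 \<pi> / p1" for \<pi>
  proof -
    have e: "C \<inter> {u. f u = True} = {u\<in>C. f u}" "C \<inter> {u. f u} = {u\<in>C. f u}" by auto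
    have "(\<Sum>u\<in>{u\<in>C. f u}. \<mu> u * PA m alice (fst u) \<pi> * PB m bob (snd u) \<pi>) = m1 \<pi>"
      unfolding m1_def Q_def using fC by (subst sum.inter_filter) (auto intro!: sum.cong)
    thus ?thesis unfolding cond_transcript_def p1_def C_def[symmetric] e by simp
  qed
  have SDeq: "SD (transcripts m) (cond_transcript n m alice bob \<mu> f False)
                            (cond_transcript n m alice bob \<mu> f True)
        = 1/2 * (\<Sum>\<pi>\<in>T. \<bar>m0 \<pi> / p0 - m1 \<pi> / p1\<bar>)"
    unfolding SD_def T_def ct0 ct1 by simp
  have m0nn: "0 \<le> m0 \<pi>" for \<pi> unfolding m0_def by (auto intro!: sum_nonneg simp: mu0 Q0)
  have m1nn: "0 \<le> m1 \<pi>" for \<pi> unfolding m1_def by (auto intro!: sum_nonneg simp: mu0 Q0)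
  have sum_m0: "(\<Sum>\<pi>\<in>T. m0 \<pi>) = p0"
  proof -
    have "(\<Sum>\<pi>\<in>T. m0 \<pi>) = (\<Sum>u\<in>C. (\<Sum>\<pi>\<in>T. (if f u then 0 else \<mu> u * Q u \<pi>)))"
      unfolding m0_def by (rule sum.swap)
    also have "\<dots> = (\<Sum>u\<in>C. (if f u then 0 else \<mu> u))"
      by (rule sum.cong[OF refl]) (simp add: sum_distrib_left[symmetric] Q1)
    also have "\<dots> = p0" unfolding p0_def wt_def using fC
      by (simp add: sum_filt if_not_P) (auto intro!: sum.cong)
    finally show ?thesis .
  qed
  have sum_m1: "(\<Sum>\<pi>\<in>T. m1 \<pi>) = p1"
  proof -
    have "(\<Sum>\<pi>\<in>T. m1 \<pi>) = (\<Sum>u\<in>C. (\<Sum>\<pi>\<in>T. (if f u then \<mu> u * Q u \<pi> else 0)))"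
      unfolding m1_def by (rule sum.swap)
    also have "\<dots> = (\<Sum>u\<in>C. (if f u then \<mu> u else 0))"
      by (rule sum.cong[OF refl]) (simp add: sum_distrib_left[symmetric] Q1)
    also have "\<dots> = p1" unfolding p1_def wt_def using fC
      by (simp add: sum_filt)
    finally show ?thesis .
  qed
  have p01: "p0 + p1 = 1"
  proof -
    have "p0 + p1 = (\<Sum>u\<in>C. (if f u then 0 else \<mu> u) + (if f u then \<mu> u else 0))"
      unfolding p0_def p1_def wt_def using fC
      by (simp add: sum.distrib sum_filt) (auto intro!: sum.cong)
    also have "\<dots> = (\<Sum>u\<in>C. \<mu> u)" by (rule sum.cong) auto
    finally show ?thesis using mu1 by simp
  qed
  have p0nn: "0 \<le> p0" using sum_m0 m0nn by (metis sum_nonneg)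
  have p1nn: "0 \<le> p1" using sum_m1 m1nn by (metis sum_nonneg)
  have SD1: "SD (transcripts m) (cond_transcript n m alice bob \<mu> f False)
                            (cond_transcript n m alice bob \<mu> f True) \<le> 1"
  proof -
    have "(\<Sum>\<pi>\<in>T. \<bar>m0 \<pi> / p0 - m1 \<pi> / p1\<bar>) \<le> (\<Sum>\<pi>\<in>T. m0 \<pi> / p0 + m1 \<pi> / p1)"
      by (rule sum_mono) (use m0nn m1nn p0nn p1nn in \<open>simp add: abs_le_iff\<close>)
    also have "\<dots> = p0 / p0 + p1 / p1"
      by (simp add: sum.distrib sum_divide_distrib[symmetric] sum_m0 sum_m1)
    also have "\<dots> \<le> 2" by (cases "p0 = 0"; cases "p1 = 0") auto
    finally show ?thesis unfolding SDeq by simp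
  qed
  obtain \<rho> where rho: "is_dist C \<rho>" and disc: "\<forall>A B. A \<subseteq> cube n \<longrightarrow> B \<subseteq> cube n \<longrightarrow> wt \<rho> (A \<times> B) \<ge> \<delta> \<longrightarrow>
           wt \<mu> ((A \<times> B) \<inter> {u. \<not> f u}) \<ge> (1/2 - \<epsilon>) * wt \<rho> (A \<times> B) \<and>
           wt \<mu> ((A \<times> B) \<inter> {u. f u}) \<ge> (1/2 - \<epsilon>) * wt \<rho> (A \<times> B)"
    using assms(5) unfolding rel_discrepancy_def C_def by blast
  obtain \<eta>A \<eta>B where eta0: "\<forall>\<pi>\<in>T. 0 \<le> \<eta>A \<pi> \<and> 0 \<le> \<eta>B \<pi>" and eta1: "(\<Sum>\<pi>\<in>T. \<eta>A \<pi> * \<eta>B \<pi>) = 1"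
    and etab: "\<forall>x\<in>cube n. \<forall>y\<in>cube n. \<forall>\<pi>\<in>T.
           (1/2) ^ M \<le> PA m alice x \<pi> / \<eta>A \<pi> \<and> PA m alice x \<pi> / \<eta>A \<pi> \<le> 2 ^ M \<and>
           (1/2) ^ M \<le> PB m bob y \<pi> / \<eta>B \<pi> \<and> PB m bob y \<pi> / \<eta>B \<pi> \<le> 2 ^ M"
    using assms(7) unfolding univ_ext_info_le_def T_def by blast
  define K :: real where "K = 2^(4*M)*\<delta>"
  have RHS: "20*(\<epsilon>+\<epsilon>'+2^(4*M)/\<epsilon>'^2*\<delta>) = 20*(\<epsilon>+\<epsilon>'+K/\<epsilon>'^2)" by (simp add: K_def)
  show ?thesis
  proof (cases "\<delta> \<le> 1 \<and> \<epsilon> < 1/20")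
    case False
    then consider "\<delta> > 1" | "\<epsilon> \<ge> 1/20" by linarith
    then show ?thesis
    proof cases
      case 1
      have "(1::real) \<le> 2^(4*M)" by simp
      then have "K \<ge> 1" unfolding K_def using 1 mult_mono[of 1 "2^(4*M)::real" 1 \<delta>] by simp
      then show ?thesis unfolding RHS using arith2 assms(2,3) SD1 by blast
    next
      case 2
      have "K \<ge> 0" unfolding K_def using assms(1) by simp
      then show ?thesis unfolding RHS using arith3 2 assms(3) SD1 by blast
    qed
  next
    case True
    have e0: "0 < 1/2 - \<epsilon>" "1/2 - \<epsilon> \<le> 1/2" using True assms(2) by auto
    have rho0: "0 \<le> \<rho> u" if "u \<in> C" for u using rho that unfolding is_dist_def by blast
    have rho1: "(\<Sum>u\<in>C. \<rho> u) = 1" using rho unfolding is_dist_def by blast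
    define r where "r \<pi> = (\<Sum>u\<in>C. \<rho> u * Q u \<pi>)" for \<pi>
    define \<eta> where "\<eta> \<pi> = \<eta>A \<pi> * \<eta>B \<pi>" for \<pi>
    define c where "c = \<delta> * (2^M)^2"
    have sum_r: "(\<Sum>\<pi>\<in>T. r \<pi>) = 1"
    proof -
      have "(\<Sum>\<pi>\<in>T. r \<pi>) = (\<Sum>u\<in>C. \<Sum>\<pi>\<in>T. \<rho> u * Q u \<pi>)" unfolding r_def by (rule sum.swap)
      also have "\<dots> = (\<Sum>u\<in>C. \<rho> u)" by (rule sum.cong[OF refl]) (simp add: sum_distrib_left[symmetric] Q1)
      finally show ?thesis using rho1 by simp
    qed
    have sum_eta: "(\<Sum>\<pi>\<in>T. \<eta> \<pi>) = 1" using eta1 unfolding \<eta>_def .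
    have x0: "replicate n False \<in> cube n" by (rule cube_ne)
    have etapos: "0 < \<eta>A \<pi> \<and> 0 < \<eta>B \<pi>" if "\<pi> \<in> T" for \<pi>
    proof -
      have h: "(1/2::real) ^ M \<le> PA m alice (replicate n False) \<pi> / \<eta>A \<pi>"
              "(1/2::real) ^ M \<le> PB m bob (replicate n False) \<pi> / \<eta>B \<pi>"
        using etab x0 that by blast+
      have "(0::real) < (1/2)^M" by simp
      then have "\<eta>A \<pi> \<noteq> 0" "\<eta>B \<pi> \<noteq> 0" using h by (metis division_ring_divide_zero not_le)+
      then show ?thesis using eta0 that by force
    qed
    have claim: "(\<Sum>u\<in>C. (if f u = bb then \<mu> u * Q u \<pi> else 0)) \<ge> (1/2-\<epsilon>) * r \<pi> - c/2 * \<eta> \<pi>"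
      if \<pi>T: "\<pi> \<in> T" for bb \<pi>
    proof -
      define \<nu> where "\<nu> u = (if f u = bb then \<mu> u else 0) - (1/2-\<epsilon>) * \<rho> u" for u
      define a where "a x = PA m alice x \<pi> / \<eta>A \<pi>" for x
      define b where "b y = PB m bob y \<pi> / \<eta>B \<pi>" for y
      have rect: "\<forall>A B. A \<subseteq> cube n \<longrightarrow> B \<subseteq> cube n \<longrightarrow> (\<Sum>u\<in>A\<times>B. \<nu> u) \<ge> - (\<delta>/2)"
      proof (intro allI impI)
        fix A B assume AB: "A \<subseteq> cube n" "B \<subseteq> cube n"
        have sub: "A \<times> B \<subseteq> C" using AB unfolding C_def by auto
        have fAB: "finite (A \<times> B)" using finite_subset[OF sub fC] .
        have eq: "(\<Sum>u\<in>A\<times>B. \<nu> u) = wt \<mu> ((A\<times>B) \<inter> {u. f u = bb}) - (1/2-\<epsilon>) * wt \<rho> (A \<times> B)"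
          unfolding \<nu>_def wt_def using fAB by (simp add: sum_filt sum_subtractf sum_distrib_left)
        have wm: "wt \<mu> ((A\<times>B) \<inter> {u. f u = bb}) \<ge> 0" unfolding wt_def
          using sub mu0 by (intro sum_nonneg) auto
        have wr: "wt \<rho> (A\<times>B) \<ge> 0" unfolding wt_def using sub rho0 by (intro sum_nonneg) auto
        show "(\<Sum>u\<in>A\<times>B. \<nu> u) \<ge> - (\<delta>/2)"
        proof (cases "wt \<rho> (A \<times> B) \<ge> \<delta>")
          case True
          then have "wt \<mu> ((A\<times>B) \<inter> {u. f u = bb}) \<ge> (1/2-\<epsilon>) * wt \<rho> (A \<times> B)"
            using disc AB by (cases bb) auto
          then show ?thesis unfolding eq using assms(1) by linarith
        next
          case False
          then have "(1/2-\<epsilon>) * wt \<rho> (A \<times> B) \<le> 1/2 * \<delta>"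
            using e0 wr by (intro mult_mono) auto
          then show ?thesis unfolding eq using wm by linarith
        qed
      qed
      have ab: "\<forall>x\<in>cube n. 0 \<le> a x \<and> a x \<le> 2^M" "\<forall>y\<in>cube n. 0 \<le> b y \<and> b y \<le> 2^M"
      proof -
        have "(0::real) \<le> (1/2)^M" by simp
        then show "\<forall>x\<in>cube n. 0 \<le> a x \<and> a x \<le> 2^M" "\<forall>y\<in>cube n. 0 \<le> b y \<and> b y \<le> 2^M"
          using etab x0 \<pi>T unfolding a_def b_def by (meson order_trans)+
      qed
      have bl: "(\<Sum>u\<in>C. \<nu> u * a (fst u) * b (snd u)) \<ge> - (\<delta>/2) * (2^M)^2"
        unfolding C_def using bilin[OF finite_cube finite_cube _ ab(1) ab(2) rect] by simp
      have ep: "0 < \<eta>A \<pi>" "0 < \<eta>B \<pi>" using etapos \<pi>T by auto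
      have "(\<Sum>u\<in>C. \<nu> u * Q u \<pi>) = \<eta> \<pi> * (\<Sum>u\<in>C. \<nu> u * a (fst u) * b (snd u))"
        unfolding sum_distrib_left \<eta>_def a_def b_def Q_def using ep by (intro sum.cong) (auto simp: field_simps)
      also have "\<dots> \<ge> \<eta> \<pi> * (- (\<delta>/2) * (2^M)^2)"
        using bl ep unfolding \<eta>_def by (intro mult_left_mono) auto
      finally have 1: "(\<Sum>u\<in>C. \<nu> u * Q u \<pi>) \<ge> - c/2 * \<eta> \<pi>" by (simp add: c_def mult_ac)
      have "(\<Sum>u\<in>C. \<nu> u * Q u \<pi>) = (\<Sum>u\<in>C. (if f u = bb then \<mu> u * Q u \<pi> else 0)) - (1/2-\<epsilon>) * r \<pi>"
        unfolding \<nu>_def r_def sum_distrib_left sum_subtractf[symmetric] by (rule sum.cong) (auto simp: algebra_simps)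
      then show ?thesis using 1 by linarith
    qed
    define L where "L \<pi> = (1/2-\<epsilon>) * r \<pi> - c/2 * \<eta> \<pi>" for \<pi>
    have L0: "m0 \<pi> \<ge> L \<pi>" if "\<pi> \<in> T" for \<pi>
    proof -
      have "m0 \<pi> = (\<Sum>u\<in>C. (if f u = False then \<mu> u * Q u \<pi> else 0))"
        unfolding m0_def by (rule sum.cong) auto
      then show ?thesis using claim[OF that, of False] unfolding L_def by simp
    qed
    have L1: "m1 \<pi> \<ge> L \<pi>" if "\<pi> \<in> T" for \<pi>
    proof -
      have "m1 \<pi> = (\<Sum>u\<in>C. (if f u = True then \<mu> u * Q u \<pi> else 0))"
        unfolding m1_def by (rule sum.cong) auto
      then show ?thesis using claim[OF that, of True] unfolding L_def by simp
    qed
    have sumL: "(\<Sum>\<pi>\<in>T. L \<pi>) = (1/2-\<epsilon>) - c/2"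
    proof -
      have "(\<Sum>\<pi>\<in>T. L \<pi>) = (1/2-\<epsilon>) * (\<Sum>\<pi>\<in>T. r \<pi>) - c/2 * (\<Sum>\<pi>\<in>T. \<eta> \<pi>)"
        unfolding L_def by (simp add: sum_subtractf sum_distrib_left)
      then show ?thesis using sum_r sum_eta by simp
    qed
    have absdiff: "(\<Sum>\<pi>\<in>T. \<bar>m0 \<pi> - m1 \<pi>\<bar>) \<le> 2*\<epsilon> + c"
    proof -
      have "(\<Sum>\<pi>\<in>T. \<bar>m0 \<pi> - m1 \<pi>\<bar>) \<le> (\<Sum>\<pi>\<in>T. m0 \<pi> + m1 \<pi> - 2 * L \<pi>)"
        using L0 L1 by (intro sum_mono) (auto simp: abs_le_iff)
      also have "\<dots> = p0 + p1 - 2 * ((1/2-\<epsilon>) - c/2)"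
        by (simp add: sum_subtractf sum.distrib sum_distrib_left[symmetric] sum_m0 sum_m1 sumL)
      finally show ?thesis using p01 by simp
    qed
    have CC: "cube n \<subseteq> cube n" by simp
    have wr1: "wt \<rho> (cube n \<times> cube n) = 1" using rho1 unfolding wt_def C_def .
    have pl: "p0 \<ge> 1/2 - \<epsilon>" "p1 \<ge> 1/2 - \<epsilon>"
      using disc[rule_format, OF CC CC] wr1 True unfolding p0_def p1_def C_def by auto
    have p0pos: "p0 > 0" "p1 > 0" using pl e0 by auto
    have a0: "p0 * \<bar>1/p0 - 2\<bar> \<le> 2*\<epsilon>"
    proof -
      have "p0 * \<bar>1/p0 - 2\<bar> = \<bar>p0 * (1/p0 - 2)\<bar>" using p0pos by (simp add: abs_mult)
      also have "\<dots> = \<bar>1 - 2*p0\<bar>" using p0pos by (simp add: algebra_simps)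
      finally show ?thesis using pl p01 by linarith
    qed
    have a1: "p1 * \<bar>2 - 1/p1\<bar> \<le> 2*\<epsilon>"
    proof -
      have "p1 * \<bar>2 - 1/p1\<bar> = \<bar>p1 * (2 - 1/p1)\<bar>" using p0pos by (simp add: abs_mult)
      also have "\<dots> = \<bar>2*p1 - 1\<bar>" using p0pos by (simp add: algebra_simps)
      finally show ?thesis using pl p01 by linarith
    qed
    have pw: "\<bar>m0 \<pi> / p0 - m1 \<pi> / p1\<bar> \<le> m0 \<pi> * \<bar>1/p0 - 2\<bar> + 2 * \<bar>m0 \<pi> - m1 \<pi>\<bar> + m1 \<pi> * \<bar>2 - 1/p1\<bar>" for \<pi>
    proof -
      have "m0 \<pi> / p0 - m1 \<pi> / p1 = m0 \<pi> * (1/p0 - 2) + 2 * (m0 \<pi> - m1 \<pi>) + m1 \<pi> * (2 - 1/p1)"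
        by (simp add: algebra_simps)
      also have "\<bar>\<dots>\<bar> \<le> \<bar>m0 \<pi> * (1/p0 - 2)\<bar> + \<bar>2 * (m0 \<pi> - m1 \<pi>)\<bar> + \<bar>m1 \<pi> * (2 - 1/p1)\<bar>"
        by (rule order_trans[OF abs_triangle_ineq add_right_mono[OF abs_triangle_ineq]])
      also have "\<dots> = m0 \<pi> * \<bar>1/p0 - 2\<bar> + 2 * \<bar>m0 \<pi> - m1 \<pi>\<bar> + m1 \<pi> * \<bar>2 - 1/p1\<bar>"
        using m0nn[of \<pi>] m1nn[of \<pi>] by (simp add: abs_mult del: right_diff_distrib' right_diff_distrib) (simp add: abs_if)
      finally show ?thesis .
    qed
    have "(\<Sum>\<pi>\<in>T. \<bar>m0 \<pi> / p0 - m1 \<pi> / p1\<bar>) \<le>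
          (\<Sum>\<pi>\<in>T. m0 \<pi> * \<bar>1/p0 - 2\<bar> + 2 * \<bar>m0 \<pi> - m1 \<pi>\<bar> + m1 \<pi> * \<bar>2 - 1/p1\<bar>)"
      by (rule sum_mono) (rule pw)
    also have "\<dots> = p0 * \<bar>1/p0 - 2\<bar> + 2 * (\<Sum>\<pi>\<in>T. \<bar>m0 \<pi> - m1 \<pi>\<bar>) + p1 * \<bar>2 - 1/p1\<bar>"
      by (simp add: sum.distrib sum_distrib_left[symmetric] sum_distrib_right[symmetric] sum_m0 sum_m1)
    also have "\<dots> \<le> 2*\<epsilon> + 2 * (2*\<epsilon> + c) + 2*\<epsilon>" by (rule add_mono[OF add_mono[OF a0] a1]) (use absdiff in simp)
    finally have SDm: "SD (transcripts m) (cond_transcript n m alice bob \<mu> f False)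
                            (cond_transcript n m alice bob \<mu> f True) \<le> 4*\<epsilon> + c"
      unfolding SDeq by simp
    have c0: "c \<ge> 0" unfolding c_def using assms(1) by simp
    have "c^2 = \<delta> * \<delta> * 2^(4*M)" unfolding c_def by (simp add: power2_eq_square power_mult mult_ac power4_eq_xxxx)
    also have "\<dots> \<le> 1 * \<delta> * 2^(4*M)" using True assms(1) by (intro mult_right_mono) auto
    finally have "K \<ge> c^2" unfolding K_def by (simp add: mult_ac)
    then show ?thesis unfolding RHS using final_arith[OF assms(2,3) c0 _ SD1 SDm] by blast
  qed
qed

end
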